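(* Let $p\ge2$ and let $(V_i)_{i\ge1}$ and $F_n^{(r)}$ be as in the context. For every $m\in\{0,1,\ldots,p-1\}$ and $n\in\mathbb N$, \[ \mathcal H^{p,m}_n := \det_{0 \leq i,j \leq n} F_{q_{i+m} + j}^{(r_{i+m})} = \prod_{i=0}^n \prod_{j=1}^{ip+m} V_j , \] where for $k\in\mathbb N$, $q_k=\lfloor k/(p-1)\rfloor$ and $r_k=k-(p-1)q_k$ are the quotient and remainder of the Euclidean division of $k$ by $p-1$.
   Context: Fix an integer $p\ge 2$. A $p$-constellation is a planar map (proper embedding of a connected graph in the sphere, up to orientation-preserving homeomorphism) whose faces are colored black or white so that adjacent faces have opposite colors, every black face has degree $p$ and every white face has degree a multiple of $p$. Edges are oriented with the white face on their right. Rooted means one edge (root edge) is distinguished; pointed means a vertex (pointed vertex) is distinguished. In a pointed constellation a vertex has type $j$ if $j$ is the minimal length of an oriented path from it to the pointed vertex; an edge has type $j\to j'$ if its origin and endpoint have types $j,j'$. Let $(x_k)_{k\ge1}$ be formal variables, a white face of degree $kp$ having weight $x_k$, and a constellation weighted by the product of its white face weights. For $i\ge1$, $V_i$ is $1$ plus the generating function of pointed rooted $p$-constellations whose root edge is of type $j\to j-1$ for some $j\le i$. A $p$-path is a lattice path in $\mathbb Z\times\mathbb N$ with rises $(1,p-1)$ and falls $(1,-1)$; its weight is the product over its falls of $V_i$, $i$ being the starting height of the fall. For $n,r\ge0$, $F_n^{(r)}$ is the sum of the weights of all $p$-paths from $(-r,r)$ to $(np,0)$. *)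

theory Defs
  imports "Jordan_Normal_Form.Determinant"
begin

text \<open>A p-path from (-r,r) is encoded by its list of steps: True = rise (1,p-1),
  False = fall (1,-1). Height after the first k steps:\<close>
definition ppath_height :: "nat \<Rightarrow> nat \<Rightarrow> bool list \<Rightarrow> nat \<Rightarrow> int" where
  "ppath_height p r s k = int r + sum_list (map (\<lambda>b. if b then int p - 1 else -1) (take k s))"

text \<open>p-paths from (-r,r) to (np,0) in Z x N: n*p+r steps, heights never negative,
  final height 0.\<close>
definition is_ppath :: "nat \<Rightarrow> nat \<Rightarrow> nat \<Rightarrow> bool list \<Rightarrow> bool" where
  "is_ppath p n r s \<longleftrightarrow> length s = n * p + r \<and>
     (\<forall>k\<le>length s. ppath_height p r s k \<ge> 0) \<and> ppath_height p r s (length s) = 0"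

definition ppath_weight :: "nat \<Rightarrow> (nat \<Rightarrow> 'a::comm_ring_1) \<Rightarrow> nat \<Rightarrow> bool list \<Rightarrow> 'a" where
  "ppath_weight p V r s = (\<Prod>k<length s. if s ! k then 1 else V (nat (ppath_height p r s k)))"

definition Fpath :: "nat \<Rightarrow> (nat \<Rightarrow> 'a::comm_ring_1) \<Rightarrow> nat \<Rightarrow> nat \<Rightarrow> 'a" where
  "Fpath p V n r = (\<Sum>s\<in>{s. is_ppath p n r s}. ppath_weight p V r s)"

end

theory Submission
  imports Defs
begin

definition stp :: "nat \<Rightarrow> bool \<Rightarrow> int" where
  "stp p b = (if b then int p - 1 else -1)"

fun W :: "nat \<Rightarrow> (nat \<Rightarrow> 'a::comm_ring_1) \<Rightarrow> int \<Rightarrow> int \<Rightarrow> bool list \<Rightarrow> 'a" where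
  "W p V tg h [] = (if h \<ge> 0 \<and> h = tg then 1 else 0)"
| "W p V tg h (b # s) = (if h < 0 then 0 else (if b then 1 else V (nat h)) * W p V tg (h + stp p b) s)"

fun G :: "nat \<Rightarrow> (nat \<Rightarrow> 'a::comm_ring_1) \<Rightarrow> nat \<Rightarrow> nat \<Rightarrow> nat \<Rightarrow> 'a" where
  "G p V h 0 h1 = (if h = h1 then 1 else 0)"
| "G p V h (Suc L) h1 = G p V (h + (p - 1)) L h1 + (if h \<ge> 1 then V h * G p V (h - 1) L h1 else 0)"

lemma W_neg: "h < 0 \<Longrightarrow> W p V tg h s = 0"
  by (cases s) auto

lemma W_char:
  "(if (\<forall>k\<le>length s. h + sum_list (map (stp p) (take k s)) \<ge> 0) \<and> h + sum_list (map (stp p) s) = tg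
    then (\<Prod>k<length s. if s ! k then 1 else V (nat (h + sum_list (map (stp p) (take k s))))) else 0)
   = W p V tg h s"
proof (induction s arbitrary: h)
  case Nil
  then show ?case by auto
next
  case (Cons b s)
  have e1: "(\<forall>k\<le>length (b#s). h + sum_list (map (stp p) (take k (b#s))) \<ge> 0) \<longleftrightarrow>
     h \<ge> 0 \<and> (\<forall>k\<le>length s. (h + stp p b) + sum_list (map (stp p) (take k s)) \<ge> 0)"
    (is "?L \<longleftrightarrow> ?R")
  proof
    assume L: ?L
    have "h \<ge> 0" using L[rule_format, of 0] by simp
    moreover have "\<forall>k\<le>length s. (h + stp p b) + sum_list (map (stp p) (take k s)) \<ge> 0"
    proof (intro allI impI)
      fix k assume "k \<le> length s"
      then show "(h + stp p b) + sum_list (map (stp p) (take k s)) \<ge> 0"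
        using L[rule_format, of "Suc k"] by (simp add: add.assoc)
    qed
    ultimately show ?R by blast
  next
    assume R: ?R
    show ?L
    proof (intro allI impI)
      fix k assume k: "k \<le> length (b#s)"
      show "h + sum_list (map (stp p) (take k (b#s))) \<ge> 0"
      proof (cases k)
        case 0 then show ?thesis using R by simp
      next
        case (Suc k') then show ?thesis using R k by (simp add: add.assoc)
      qed
    qed
  qed
  have e2: "(\<Prod>k<length (b#s). if (b#s) ! k then 1 else V (nat (h + sum_list (map (stp p) (take k (b#s))))))
     = (if b then 1 else V (nat h)) * (\<Prod>k<length s. if s ! k then 1 else V (nat ((h + stp p b) + sum_list (map (stp p) (take k s)))))"
  proof -
    have eq: "\<And>k. h + sum_list (map (stp p) (take (Suc k) (b#s))) = (h + stp p b) + sum_list (map (stp p) (take k s))"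
      by simp
    show ?thesis
      apply (simp only: length_Cons prod.lessThan_Suc_shift eq nth_Cons_Suc nth_Cons_0)
      apply simp
      done
  qed
  show ?case
  proof (cases "h < 0")
    case True
    then show ?thesis using e1 by auto
  next
    case False
    then show ?thesis using e1 e2 Cons.IH[of "h + stp p b", symmetric] by (auto simp: add.assoc)
  qed
qed

lemma finite_len: "finite {s::bool list. length s = L}"
  using finite_lists_length_eq[of "UNIV::bool set" L] by simp

lemma sum_len_Suc:
  "(\<Sum>s\<in>{s::bool list. length s = Suc L}. f s) = (\<Sum>s\<in>{s. length s = L}. f (True # s) + f (False # s))"
proof -
  let ?A = "{s::bool list. length s = L}"
  have eq: "{s::bool list. length s = Suc L} = (#) True ` ?A \<union> (#) False ` ?A"
    by (auto simp: length_Suc_conv image_iff)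
  have "(\<Sum>s\<in>{s::bool list. length s = Suc L}. f s) = (\<Sum>s\<in>(#) True ` ?A. f s) + (\<Sum>s\<in>(#) False ` ?A. f s)"
    unfolding eq by (rule sum.union_disjoint) (auto simp: finite_len)
  also have "\<dots> = (\<Sum>s\<in>?A. f (True # s)) + (\<Sum>s\<in>?A. f (False # s))"
    by (simp add: sum.reindex)
  finally show ?thesis by (simp add: sum.distrib)
qed

lemma G_bridge:
  assumes "p \<ge> 1"
  shows "(\<Sum>s\<in>{s::bool list. length s = L}. W p V (int h1) (int h) s) = G p V h L h1"
proof (induction L arbitrary: h)
  case 0
  then show ?case by simp
next
  case (Suc L)
  have a: "int h + stp p True = int (h + (p - 1))" using assms by (simp add: stp_def)
  show ?case
  proof (cases "h \<ge> 1")
    case True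
    have b: "int h + stp p False = int (h - 1)" using True by (simp add: stp_def)
    show ?thesis unfolding sum_len_Suc
      using Suc.IH[of "h + (p - 1)"] Suc.IH[of "h - 1"] True
      by (simp add: a b sum.distrib flip: sum_distrib_left)
  next
    case False
    then have "h = 0" by simp
    then show ?thesis unfolding sum_len_Suc
      using Suc.IH[of "h + (p - 1)"] assms
      by (simp add: a stp_def W_neg of_nat_diff)
  qed
qed

lemma G_Z1: "h1 > h + L * (p - 1) \<Longrightarrow> G p V h L h1 = 0"
proof (induction L arbitrary: h)
  case 0 then show ?case by simp
next
  case (Suc L)
  have "G p V (h + (p - 1)) L h1 = 0" using Suc.prems by (intro Suc.IH) (simp add: add.assoc)
  moreover have "h \<ge> 1 \<Longrightarrow> G p V (h - 1) L h1 = 0" using Suc.prems by (intro Suc.IH) simp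
  ultimately show ?case by simp
qed

lemma G_one: "G p V h L (h + L * (p - 1)) = 1"
proof (induction L arbitrary: h)
  case 0 then show ?case by simp
next
  case (Suc L)
  have "h \<ge> 1 \<Longrightarrow> G p V (h - 1) L (h + Suc L * (p - 1)) = 0" by (rule G_Z1) auto
  moreover have "G p V (h + (p - 1)) L (h + Suc L * (p - 1)) = 1"
  proof -
    have e: "h + Suc L * (p - 1) = (h + (p - 1)) + L * (p - 1)" by simp
    show ?thesis unfolding e by (rule Suc.IH)
  qed
  ultimately show ?case by simp
qed

lemma G_Z2: "h1 + L < h \<Longrightarrow> G p V h L h1 = 0"
  by (induction L arbitrary: h) auto

lemma G_diag: "G p V L L 0 = (\<Prod>l=1..L. V l)"
proof (induction L)
  case 0 then show ?case by simp
next
  case (Suc L)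
  have "G p V (Suc L + (p - 1)) L 0 = 0" by (rule G_Z2) auto
  then show ?case using Suc.IH by (simp add: prod.nat_ivl_Suc' mult.commute)
qed

lemma G_mod: "p \<ge> 1 \<Longrightarrow> G p V h L h1 \<noteq> 0 \<Longrightarrow> \<exists>a. h1 + L = h + a * p"
proof (induction L arbitrary: h)
  case 0 then show ?case by (auto split: if_splits)
next
  case (Suc L)
  show ?case
  proof (cases "G p V (h + (p - 1)) L h1 = 0")
    case False
    then obtain a where "h1 + L = h + (p - 1) + a * p" using Suc by blast
    then have "h1 + Suc L = h + Suc a * p" using Suc.prems by simp
    then show ?thesis by blast
  next
    case True
    then have "h \<ge> 1" "G p V (h - 1) L h1 \<noteq> 0" using Suc.prems by (auto split: if_splits)
    then obtain a where "h1 + L = h - 1 + a * p" using Suc by blast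
    then have "h1 + Suc L = h + a * p" using \<open>h \<ge> 1\<close> by simp
    then show ?thesis by blast
  qed
qed

lemma G_split:
  assumes "H \<ge> h + L1 * (p - 1)"
  shows "G p V h (L1 + L2) h1 = (\<Sum>x\<le>H. G p V h L1 x * G p V x L2 h1)"
  using assms
proof (induction L1 arbitrary: h)
  case 0
  have "(\<Sum>x\<le>H. G p V h 0 x * G p V x L2 h1) = (\<Sum>x\<le>H. if h = x then G p V h L2 h1 else 0)"
    by (rule sum.cong) auto
  also have "\<dots> = G p V h L2 h1" using 0 by simp
  finally show ?case by simp
next
  case (Suc L1)
  have i1: "G p V (h + (p - 1)) (L1 + L2) h1 = (\<Sum>x\<le>H. G p V (h + (p - 1)) L1 x * G p V x L2 h1)"
    using Suc.prems by (intro Suc.IH) (simp add: add.assoc)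
  have i2: "G p V (h - 1) (L1 + L2) h1 = (\<Sum>x\<le>H. G p V (h - 1) L1 x * G p V x L2 h1)"
    by (intro Suc.IH order_trans[OF _ Suc.prems]) simp
  show ?case
  proof (cases "h \<ge> 1")
    case True
    have "G p V h (Suc L1 + L2) h1 = G p V (h + (p - 1)) (L1 + L2) h1 + V h * G p V (h - 1) (L1 + L2) h1"
      using True by simp
    also have "\<dots> = (\<Sum>x\<le>H. G p V (h + (p - 1)) L1 x * G p V x L2 h1) + V h * (\<Sum>x\<le>H. G p V (h - 1) L1 x * G p V x L2 h1)"
      by (simp only: i1 i2)
    also have "\<dots> = (\<Sum>x\<le>H. G p V h (Suc L1) x * G p V x L2 h1)"
      using True by (simp add: sum_distrib_left sum.distrib distrib_right mult.assoc)
    finally show ?thesis .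
  next
    case False
    have "G p V h (Suc L1 + L2) h1 = G p V (h + (p - 1)) (L1 + L2) h1"
      using False by simp
    also have "\<dots> = (\<Sum>x\<le>H. G p V (h + (p - 1)) L1 x * G p V x L2 h1)"
      by (simp only: i1)
    also have "\<dots> = (\<Sum>x\<le>H. G p V h (Suc L1) x * G p V x L2 h1)"
      using False by simp
    finally show ?thesis .
  qed
qed


lemma stp_fun: "(\<lambda>b. if b then int p - 1 else -1) = stp p"
  by (rule ext) (simp add: stp_def)

lemma Fpath_G:
  assumes "p \<ge> 1"
  shows "Fpath p V N r = G p V r (N * p + r) 0"
proof -
  have set_eq: "{s. is_ppath p N r s} = {s \<in> {s. length s = N * p + r}. is_ppath p N r s}" by (auto simp: is_ppath_def)
  have "Fpath p V N r = (\<Sum>s\<in>{s. length s = N * p + r}. if is_ppath p N r s then ppath_weight p V r s else 0)"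
    unfolding Fpath_def set_eq by (rule sum.inter_filter) (rule finite_len)
  also have "\<dots> = (\<Sum>s\<in>{s. length s = N * p + r}. W p V (int 0) (int r) s)"
  proof (rule sum.cong)
    fix s assume "s \<in> {s::bool list. length s = N * p + r}"
    then have len: "length s = N * p + r" by simp
    show "(if is_ppath p N r s then ppath_weight p V r s else 0) = W p V (int 0) (int r) s"
      using W_char[where h="int r" and tg="int 0" and p=p and s=s and V=V] len
      unfolding is_ppath_def ppath_weight_def ppath_height_def stp_fun
      by simp
  qed simp
  also have "\<dots> = G p V r (N * p + r) 0" by (rule G_bridge[OF assms])
  finally show ?thesis .
qed


lemma entry_split:
  fixes i j n m p :: nat and V :: "nat \<Rightarrow> 'a::comm_ring_1"
  assumes p2: "p \<ge> 2" and m: "m \<le> p - 1" and j: "j \<le> n"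
  defines "q \<equiv> (i + m) div (p - 1)" and "rr \<equiv> (i + m) mod (p - 1)"
  shows "Fpath p V (q + j) rr = (\<Sum>t<Suc n. G p V rr (i + q) (t * p + m) * G p V (t * p + m) (j * p + m) 0)"
proof -
  have qp: "q * p = q * (p - 1) + q" using p2 by (cases p) auto
  have k: "q * (p - 1) + rr = i + m" unfolding q_def rr_def by (rule div_mult_mod_eq)
  have len: "(q + j) * p + rr = (i + q) + (j * p + m)"
    using qp k by (simp add: distrib_right)
  define H where "H = rr + (i + q) * (p - 1) + n * p + m"
  define f where "f x = G p V rr (i + q) x * G p V x (j * p + m) 0" for x
  define g where "g t = t * p + m" for t :: nat
  have "Fpath p V (q + j) rr = G p V rr ((i + q) + (j * p + m)) 0"
    using Fpath_G[of p V "q + j" rr] p2 len by simp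
  also have "\<dots> = (\<Sum>x\<le>H. f x)"
    unfolding f_def by (rule G_split) (simp add: H_def)
  also have "\<dots> = (\<Sum>x\<in>g ` {..<Suc n}. f x)"
  proof (rule sum.mono_neutral_right)
    show "finite {..H}" by simp
    show "g ` {..<Suc n} \<subseteq> {..H}"
    proof
      fix x assume "x \<in> g ` {..<Suc n}"
      then obtain t where t0: "t < Suc n" "x = g t" by blast
      then have t: "t \<le> n" "x = t * p + m" by (auto simp: g_def)
      have "t * p \<le> n * p" using t by simp
      then show "x \<in> {..H}" using t unfolding H_def atMost_iff by linarith
    qed
    show "\<forall>x\<in>{..H} - g ` {..<Suc n}. f x = 0"
    proof (rule ballI, rule ccontr)
      fix x assume x: "x \<in> {..H} - g ` {..<Suc n}" and nz: "f x \<noteq> 0"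
      then have "G p V x (j * p + m) 0 \<noteq> 0" by (auto simp: f_def)
      then obtain a where a: "0 + (j * p + m) = x + a * p" using G_mod[of p V x "j * p + m" 0] p2 by auto
      show False
      proof (cases "a \<le> j")
        case True
        have e: "(j - a) * p = j * p - a * p" by (simp add: diff_mult_distrib)
        have "a * p \<le> j * p" using True by simp
        then have "x = (j - a) * p + m" unfolding e using a by linarith
        then have "x = g (j - a)" by (simp add: g_def)
        moreover have "j - a \<in> {..<Suc n}" using j by simp
        ultimately have "x \<in> g ` {..<Suc n}" by (rule image_eqI)
        then show False using x by blast
      next
        case False
        then have "Suc j * p \<le> a * p" by (intro mult_le_mono1) simp
        moreover have "Suc j * p = j * p + p" by simp
        moreover have "m < p" using m p2 by linarith
        ultimately show False using a by linarith
      qed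
    qed
  qed
  also have "\<dots> = (\<Sum>t<Suc n. f (g t))"
  proof -
    have inj: "inj_on g {..<Suc n}"
    proof (rule inj_onI)
      fix a b assume "g a = g b"
      then have "a * p = b * p" by (simp add: g_def)
      then show "a = b" using p2 by simp
    qed
    show ?thesis using sum.reindex[OF inj, of f] by simp
  qed
  finally show ?thesis by (simp add: f_def g_def)
qed


lemma prod_list_diag:
  "A \<in> carrier_mat N N \<Longrightarrow> prod_list (diag_mat A) = (\<Prod>i<N. A $$ (i, i))"
  unfolding diag_mat_def
  by (simp add: prod.distinct_set_conv_list[symmetric] atLeast0LessThan)

theorem theorem3:
  fixes p m n :: nat and V :: "nat \<Rightarrow> 'a::comm_ring_1"
  assumes "p \<ge> 2" and "m \<le> p - 1"
  shows "det (mat (Suc n) (Suc n)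
            (\<lambda>(i, j). Fpath p V ((i + m) div (p - 1) + j) ((i + m) mod (p - 1))))
         = (\<Prod>i\<le>n. \<Prod>j=1..i * p + m. V j)"
proof -
  define q where "q i = (i + m) div (p - 1)" for i
  define rr where "rr i = (i + m) mod (p - 1)" for i
  define A where "A = mat (Suc n) (Suc n) (\<lambda>(i, t). G p V (rr i) (i + q i) (t * p + m))"
  define B where "B = mat (Suc n) (Suc n) (\<lambda>(j, t). G p V (t * p + m) (j * p + m) 0)"
  have Ac: "A \<in> carrier_mat (Suc n) (Suc n)" and Bc: "B \<in> carrier_mat (Suc n) (Suc n)"
    by (auto simp: A_def B_def)
  have diagA: "rr i + (i + q i) * (p - 1) = i * p + m" for i
  proof -
    have k: "q i * (p - 1) + rr i = i + m" unfolding q_def rr_def by (rule div_mult_mod_eq)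
    have ip: "i * p = i * (p - 1) + i" using assms(1) by (cases p) auto
    show ?thesis using k ip by (simp add: distrib_right)
  qed
  have M: "mat (Suc n) (Suc n) (\<lambda>(i, j). Fpath p V ((i + m) div (p - 1) + j) ((i + m) mod (p - 1)))
     = A * transpose_mat B"
  proof (rule eq_matI)
    fix i j assume i: "i < dim_row (A * transpose_mat B)" and j: "j < dim_col (A * transpose_mat B)"
    then have i': "i < Suc n" and j': "j < Suc n" using Ac Bc by auto
    have "(A * transpose_mat B) $$ (i, j) = (\<Sum>t<Suc n. A $$ (i, t) * B $$ (j, t))"
      using i' j' Ac Bc by (simp add: scalar_prod_def atLeast0LessThan)
    also have "\<dots> = (\<Sum>t<Suc n. G p V (rr i) (i + q i) (t * p + m) * G p V (t * p + m) (j * p + m) 0)"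
      using i' j' by (intro sum.cong) (auto simp: A_def B_def)
    also have "\<dots> = Fpath p V (q i + j) (rr i)"
      using entry_split[OF assms, where j=j and n=n and i=i and V=V] j' unfolding q_def rr_def by simp
    finally show "mat (Suc n) (Suc n) (\<lambda>(i, j). Fpath p V ((i + m) div (p - 1) + j) ((i + m) mod (p - 1))) $$ (i, j)
        = (A * transpose_mat B) $$ (i, j)"
      using i' j' by (simp add: q_def rr_def)
  qed (use Ac Bc in auto)
  have dA: "det A = 1"
  proof -
    have "det A = prod_list (diag_mat A)"
    proof (rule det_lower_triangular[OF _ Ac])
      fix i t assume it: "i < t" "t < Suc n"
      have "t * p \<ge> Suc i * p" using it by (intro mult_le_mono1) simp
      moreover have "Suc i * p = i * p + p" by simp
      ultimately have "t * p + m > rr i + (i + q i) * (p - 1)" unfolding diagA[of i] using assms(1) by linarith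
      then show "A $$ (i, t) = 0" using it by (simp add: A_def G_Z1)
    qed
    also have "\<dots> = (\<Prod>i<Suc n. A $$ (i, i))" by (rule prod_list_diag[OF Ac])
    also have "\<dots> = (\<Prod>i<Suc n. 1)"
    proof (rule prod.cong)
      fix i assume "i \<in> {..<Suc n}"
      then have "A $$ (i, i) = G p V (rr i) (i + q i) (i * p + m)"
        by (simp add: A_def)
      then show "A $$ (i, i) = 1" using G_one[of p V "rr i" "i + q i"] unfolding diagA[of i] by simp
    qed simp
    finally show ?thesis by simp
  qed
  have dB: "det B = (\<Prod>i\<le>n. \<Prod>j=1..i * p + m. V j)"
  proof -
    have "det B = prod_list (diag_mat B)"
    proof (rule det_lower_triangular[OF _ Bc])
      fix j t assume jt: "j < t" "t < Suc n"
      have "t * p \<ge> Suc j * p" using jt by (intro mult_le_mono1) simp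
      moreover have "Suc j * p = j * p + p" by simp
      ultimately have "0 + (j * p + m) < t * p + m" using assms(1) by linarith
      then show "B $$ (j, t) = 0" using jt by (simp add: B_def G_Z2)
    qed
    also have "\<dots> = (\<Prod>i<Suc n. B $$ (i, i))" by (rule prod_list_diag[OF Bc])
    also have "\<dots> = (\<Prod>i<Suc n. \<Prod>j=1..i * p + m. V j)"
      by (rule prod.cong) (auto simp: B_def G_diag)
    finally show ?thesis by (simp add: lessThan_Suc_atMost)
  qed
  have "det (A * transpose_mat B) = det A * det (transpose_mat B)"
    by (rule det_mult[OF Ac]) (use Bc in simp)
  also have "\<dots> = det A * det B" using det_transpose[OF Bc] by simp
  finally show ?thesis unfolding M using dA dB by simp
qed

end
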